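(* Let $V_0$ be a nonlocal vertex algebra over $\mathbb{C}$ and let $W_0$ be a simple $V_0$-module. Regard $V=V_0[[\hbar]]$ as an $\hbar$-adic nonlocal vertex algebra and $W=W_0[[\hbar]]$ as a $V$-module (by $\hbar$-linear extension). Then $W$ is a simple $V$-module.
   Context: Let $\hbar$ be a formal variable. A $\mathbb{C}[[\hbar]]$-module is topologically free if it is of the form $W_0[[\hbar]]$ for a complex vector space $W_0$. An ordinary nonlocal vertex algebra $V_0$ (resp. a $V_0$-module $W_0$) makes $V_0[[\hbar]]$ an $\hbar$-adic nonlocal vertex algebra (resp. $W_0[[\hbar]]$ a module over it) by extending the vertex operators $\mathbb{C}[[\hbar]]$-linearly and $\hbar$-adically continuously. For a $\mathbb{C}[[\hbar]]$-submodule $U$ of a topologically free module $W$, set $[U]=\{w\in W:\hbar^n w\in U\text{ for some }n\ge 1\}$ and let $\overline{U}$ be the closure of $U$ in the $\hbar$-adic topology. Convention: a submodule of a module $W$ over an $\hbar$-adic nonlocal vertex algebra $V$ is a $\mathbb{C}[[\hbar]]$-submodule $W_1$ stable under all operators $u_n$ ($u\in V$, $n\in\mathbb{Z}$, where $Y_W(u,z)=\sum_n u_nz^{-n-1}$) such that $\overline{W_1}=W_1$ and $[W_1]=W_1$. A module $W$ is simple if $W\neq 0$ and its only submodules are $0$ and $W$. *)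

theory Defs
  imports Complex_Main "HOL-Library.Groups_Big_Fun" "HOL-Computational_Algebra.Formal_Power_Series"
begin

text \<open>Vertex operators are encoded by their modes: Y u n w is the coefficient
  u_n w in Y(u,z)w = sum_n u_n w z^(-n-1).\<close>

text \<open>Weak associativity, written coefficientwise: for all u, v, w there is l >= 0 with
  (z0+z2)^l Y_W(u,z0+z2) Y_W(v,z2) w = (z0+z2)^l Y_W(Y(u,z0)v,z2) w.
  The coefficient of z0^(-m-1) z2^(-n-1) on the left is
  sum_(i>=0) binom(i-m-1,i) u_(l+m-i) v_(n+i) w, on the right
  sum_(t=0..l) binom(l,t) (u_(m+l-t) v)_(n+t) w.\<close>
definition weak_assoc ::
  "(complex \<Rightarrow> 'w::ab_group_add \<Rightarrow> 'w) \<Rightarrow> ('v \<Rightarrow> int \<Rightarrow> 'v \<Rightarrow> 'v) \<Rightarrow> ('v \<Rightarrow> int \<Rightarrow> 'w \<Rightarrow> 'w) \<Rightarrow> bool"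
  where "weak_assoc scW Y YW \<longleftrightarrow>
    (\<forall>u v w. \<exists>l::nat. \<forall>m n::int.
       Sum_any (\<lambda>i::nat. scW ((of_int (int i - m - 1) :: complex) gchoose i)
                          (YW u (int l + m - int i) (YW v (n + int i) w)))
     = (\<Sum>t\<le>l. scW (of_nat (l choose t)) (YW (Y u (m + int l - int t) v) (n + int t) w)))"

definition nlva ::
  "(complex \<Rightarrow> 'v::ab_group_add \<Rightarrow> 'v) \<Rightarrow> 'v \<Rightarrow> ('v \<Rightarrow> int \<Rightarrow> 'v \<Rightarrow> 'v) \<Rightarrow> bool"
  where "nlva sc vac Y \<longleftrightarrow>
    vector_space sc \<and>
    (\<forall>u n. Vector_Spaces.linear sc sc (Y u n)) \<and>
    (\<forall>n w. Vector_Spaces.linear sc sc (\<lambda>u. Y u n w)) \<and>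
    (\<forall>u w. \<exists>N. \<forall>n\<ge>N. Y u n w = 0) \<and>
    (\<forall>n w. Y vac n w = (if n = -1 then w else 0)) \<and>
    (\<forall>u. (\<forall>n\<ge>0. Y u n vac = 0) \<and> Y u (-1) vac = u) \<and>
    weak_assoc sc Y Y"

definition nlva_module ::
  "(complex \<Rightarrow> 'v::ab_group_add \<Rightarrow> 'v) \<Rightarrow> 'v \<Rightarrow> ('v \<Rightarrow> int \<Rightarrow> 'v \<Rightarrow> 'v)
   \<Rightarrow> (complex \<Rightarrow> 'w::ab_group_add \<Rightarrow> 'w) \<Rightarrow> ('v \<Rightarrow> int \<Rightarrow> 'w \<Rightarrow> 'w) \<Rightarrow> bool"
  where "nlva_module sc vac Y scW YW \<longleftrightarrow>
    vector_space scW \<and>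
    (\<forall>u n. Vector_Spaces.linear scW scW (YW u n)) \<and>
    (\<forall>n w. Vector_Spaces.linear sc scW (\<lambda>u. YW u n w)) \<and>
    (\<forall>u w. \<exists>N. \<forall>n\<ge>N. YW u n w = 0) \<and>
    (\<forall>n w. YW vac n w = (if n = -1 then w else 0)) \<and>
    weak_assoc scW Y YW"

definition simple_module ::
  "(complex \<Rightarrow> 'w::ab_group_add \<Rightarrow> 'w) \<Rightarrow> ('v \<Rightarrow> int \<Rightarrow> 'w \<Rightarrow> 'w) \<Rightarrow> bool"
  where "simple_module scW YW \<longleftrightarrow>
    (\<exists>w::'w. w \<noteq> 0) \<and>
    (\<forall>S. module.subspace scW S \<and> (\<forall>u n w. w \<in> S \<longrightarrow> YW u n w \<in> S)
         \<longrightarrow> S = {0} \<or> S = UNIV)"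

text \<open>h-adic setting.  An element of W0[[h]] is its coefficient sequence nat => 'w.\<close>

definition hscale :: "(complex \<Rightarrow> 'w::ab_group_add \<Rightarrow> 'w) \<Rightarrow> complex fps \<Rightarrow> (nat \<Rightarrow> 'w) \<Rightarrow> (nat \<Rightarrow> 'w)"
  where "hscale scW a f = (\<lambda>k. \<Sum>i\<le>k. scW (fps_nth a i) (f (k - i)))"

text \<open>h-linear, h-adically continuous extension of the modes: u in V0[[h]] acting on W0[[h]].\<close>
definition hext :: "('v \<Rightarrow> int \<Rightarrow> 'w::ab_group_add \<Rightarrow> 'w) \<Rightarrow> (nat \<Rightarrow> 'v) \<Rightarrow> int \<Rightarrow> (nat \<Rightarrow> 'w) \<Rightarrow> (nat \<Rightarrow> 'w)"
  where "hext YW u n f = (\<lambda>k. \<Sum>i\<le>k. YW (u i) n (f (k - i)))"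

definition hpow :: "nat \<Rightarrow> (nat \<Rightarrow> 'w::zero) \<Rightarrow> (nat \<Rightarrow> 'w)"
  where "hpow n f = (\<lambda>k. if k < n then 0 else f (k - n))"

definition hsat :: "(nat \<Rightarrow> 'w::zero) set \<Rightarrow> (nat \<Rightarrow> 'w) set"
  where "hsat U = {f. \<exists>n\<ge>1. hpow n f \<in> U}"

text \<open>Closure in the h-adic topology (basic neighbourhoods f + h^k W).\<close>
definition hclosure :: "(nat \<Rightarrow> 'w) set \<Rightarrow> (nat \<Rightarrow> 'w) set"
  where "hclosure U = {f. \<forall>k. \<exists>g\<in>U. \<forall>i<k. g i = f i}"

definition hsubmodule ::
  "(complex \<Rightarrow> 'w::ab_group_add \<Rightarrow> 'w) \<Rightarrow> ('v \<Rightarrow> int \<Rightarrow> 'w \<Rightarrow> 'w) \<Rightarrow> (nat \<Rightarrow> 'w) set \<Rightarrow> bool"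
  where "hsubmodule scW YW S \<longleftrightarrow>
    (\<lambda>k. 0) \<in> S \<and>
    (\<forall>f\<in>S. \<forall>g\<in>S. (\<lambda>k. f k + g k) \<in> S) \<and>
    (\<forall>a. \<forall>f\<in>S. hscale scW a f \<in> S) \<and>
    (\<forall>u n f. f \<in> S \<longrightarrow> hext YW u n f \<in> S) \<and>
    hclosure S = S \<and> hsat S = S"

definition hsimple ::
  "(complex \<Rightarrow> 'w::ab_group_add \<Rightarrow> 'w) \<Rightarrow> ('v \<Rightarrow> int \<Rightarrow> 'w \<Rightarrow> 'w) \<Rightarrow> bool"
  where "hsimple scW YW \<longleftrightarrow>
    (\<exists>f::nat \<Rightarrow> 'w. f \<noteq> (\<lambda>k. 0)) \<and>
    (\<forall>S. hsubmodule scW YW S \<longrightarrow> S = {\<lambda>k. 0} \<or> S = UNIV)"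

end

theory Submission
  imports Defs
begin

lemma hscale_X_pow:
  assumes vs: "vector_space scW"
  shows "hscale scW (fps_X ^ k) f = hpow k f"
proof
  fix j
  interpret vector_space scW by (rule vs)
  show "hscale scW (fps_X ^ k) f j = hpow k f j"
  proof (cases "k \<le> j")
    case True
    have "hscale scW (fps_X ^ k) f j = (\<Sum>i\<le>j. if i = k then f (j - i) else 0)"
      unfolding hscale_def by (intro sum.cong) auto
    also have "\<dots> = f (j - k)" using True by (simp add: sum.delta)
    finally show ?thesis using True by (simp add: hpow_def)
  next
    case False
    have "hscale scW (fps_X ^ k) f j = (\<Sum>i\<le>j. if i = k then f (j - i) else 0)"
      unfolding hscale_def by (intro sum.cong) auto
    also have "\<dots> = 0" using False by (simp add: sum.delta)
    finally show ?thesis using False by (simp add: hpow_def)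
  qed
qed

theorem lemma3p3:
  fixes sc :: "complex \<Rightarrow> 'v::ab_group_add \<Rightarrow> 'v" and vac :: 'v
    and Y :: "'v \<Rightarrow> int \<Rightarrow> 'v \<Rightarrow> 'v"
    and scW :: "complex \<Rightarrow> 'w::ab_group_add \<Rightarrow> 'w"
    and YW :: "'v \<Rightarrow> int \<Rightarrow> 'w \<Rightarrow> 'w"
  assumes "nlva sc vac Y"
    and "nlva_module sc vac Y scW YW"
    and "simple_module scW YW"
  shows "hsimple scW YW"
proof -
  have vs: "vector_space scW" using assms(2) by (simp add: nlva_module_def)
  interpret vector_space scW by (rule vs)
  have ne: "\<exists>w::'w. w \<noteq> 0" and sm: "\<And>S. module.subspace scW S \<Longrightarrow> (\<forall>u n w. w \<in> S \<longrightarrow> YW u n w \<in> S)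
         \<Longrightarrow> S = {0} \<or> S = UNIV"
    using assms(3) unfolding simple_module_def by blast+
  have part2: "S = {\<lambda>k. 0} \<or> S = UNIV" if hs: "hsubmodule scW YW S" for S
  proof -
    note h = hs[unfolded hsubmodule_def]
    have z: "(\<lambda>k. 0) \<in> S" and add: "\<And>f g. f \<in> S \<Longrightarrow> g \<in> S \<Longrightarrow> (\<lambda>k. f k + g k) \<in> S"
      and sc: "\<And>a f. f \<in> S \<Longrightarrow> hscale scW a f \<in> S"
      and ex: "\<And>u n f. f \<in> S \<Longrightarrow> hext YW u n f \<in> S"
      and cl: "hclosure S = S" and sat: "hsat S = S" using h by blast+
    define T where "T = (\<lambda>f. f 0) ` S"
    have "module.subspace scW T"
      unfolding module.subspace_def[OF module_axioms]
    proof (intro conjI ballI allI)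
      show "0 \<in> T" unfolding T_def using z by force
    next
      fix x y assume "x \<in> T" "y \<in> T"
      then obtain f g where "f \<in> S" "g \<in> S" "x = f 0" "y = g 0" unfolding T_def by auto
      then show "x + y \<in> T" unfolding T_def using add by force
    next
      fix c x assume "x \<in> T"
      then obtain f where f: "f \<in> S" "x = f 0" unfolding T_def by auto
      have "hscale scW (fps_const c) f 0 = scW c x" using f by (simp add: hscale_def)
      then show "scW c x \<in> T" unfolding T_def using sc[OF f(1)] by (metis image_eqI)
    qed
    moreover have "\<forall>u n w. w \<in> T \<longrightarrow> YW u n w \<in> T"
    proof (intro allI impI)
      fix u n w assume "w \<in> T"
      then obtain f where f: "f \<in> S" "w = f 0" unfolding T_def by auto
      have "hext YW (\<lambda>i. u) n f 0 = YW u n w" using f by (simp add: hext_def)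
      then show "YW u n w \<in> T" unfolding T_def using ex[OF f(1)] by (metis image_eqI)
    qed
    ultimately have "T = {0} \<or> T = UNIV" by (rule sm)
    then show ?thesis
    proof
      assume T0: "T = {0}"
      have "\<forall>f\<in>S. f k = 0" for k
      proof (induction k)
        case 0 show ?case
        proof
          fix f assume "f \<in> S"
          then have "f 0 \<in> T" unfolding T_def by (rule imageI)
          then show "f 0 = 0" using T0 by simp
        qed
      next
        case (Suc k)
        show ?case
        proof
          fix f assume f: "f \<in> S"
          have "f 0 \<in> T" using f unfolding T_def by (rule imageI)
          then have f0: "f 0 = 0" using T0 by simp
          have "hpow 1 (\<lambda>k. f (Suc k)) = f"
          proof
            fix j show "hpow 1 (\<lambda>k. f (Suc k)) j = f j"
              using f0 by (cases j) (simp_all add: hpow_def)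
          qed
          then have "hpow 1 (\<lambda>k. f (Suc k)) \<in> S" using f by simp
          then have "(\<lambda>k. f (Suc k)) \<in> hsat S" unfolding hsat_def by blast
          then have "(\<lambda>k. f (Suc k)) \<in> S" using sat by simp
          with Suc.IH have "(\<lambda>k. f (Suc k)) k = 0" by (rule bspec)
          then show "f (Suc k) = 0" by simp
        qed
      qed
      then have fz: "\<And>f. f \<in> S \<Longrightarrow> f = (\<lambda>k. 0)" by (simp add: fun_eq_iff)
      have "S = {\<lambda>k. 0}"
      proof (rule set_eqI)
        fix f show "f \<in> S \<longleftrightarrow> f \<in> {\<lambda>k. 0}"
        proof
          assume "f \<in> S" then have "f = (\<lambda>k. 0)" by (rule fz)
          then show "f \<in> {\<lambda>k. 0}" by simp
        next
          assume "f \<in> {\<lambda>k. 0}" then show "f \<in> S" using z by simp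
        qed
      qed
      then show ?thesis by (rule disjI1)
    next
      assume TU: "T = UNIV"
      have approx: "\<exists>h\<in>S. \<forall>i<k. h i = g i" for g k
      proof (induction k)
        case 0 show ?case using z by blast
      next
        case (Suc k)
        then obtain h where h: "h \<in> S" "\<forall>i<k. h i = g i" by blast
        have "g k - h k \<in> T" using TU by simp
        then obtain f where f1: "g k - h k = f 0" and f0: "f \<in> S" unfolding T_def by (rule imageE)
        have f: "f \<in> S" "f 0 = g k - h k" using f0 f1 by simp_all
        have "hpow k f \<in> S" using sc[OF f(1), of "fps_X ^ k"] hscale_X_pow[OF vs] by simp
        then have mem: "(\<lambda>j. h j + hpow k f j) \<in> S" using add h(1) by blast
        have ag: "\<forall>i<Suc k. h i + hpow k f i = g i"
          using h(2) f(2) by (auto simp: hpow_def less_Suc_eq)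
        show ?case
        proof (rule bexI[OF _ mem])
          show "\<forall>i<Suc k. (\<lambda>j. h j + hpow k f j) i = g i" using ag by simp
        qed
      qed
      have "g \<in> S" for g
      proof -
        have "g \<in> hclosure S" unfolding hclosure_def mem_Collect_eq
          by (intro allI approx)
        then show ?thesis using cl by simp
      qed
      then have "S = UNIV" by blast
      then show ?thesis by (rule disjI2)
    qed
  qed
  obtain w :: 'w where "w \<noteq> 0" using ne by blast
  then have "(\<lambda>k::nat. w) \<noteq> (\<lambda>k. 0)" by (metis)
  then show ?thesis unfolding hsimple_def using part2 by blast
qed

end
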